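(* For every $U\in\mathcal U_n$, the part listing $\tilde p(U)$ is the minimal part listing for $U$ with respect to graded reverse lexicographic order.
   Context: A unit interval order on $\{1,\dots,n\}$ is given by closed intervals $I_1,\dots,I_n$ of length $1$, numbered from left to right, with $i\prec j$ iff $I_i$ lies strictly to the left of $I_j$; $\mathcal U_n$ is the set of these. For a sequence $w=(w_1,\dots,w_n)$ of nonnegative integers, $P(w)$ is the poset on $\{1,\dots,n\}$ with $i\prec j$ iff $w_j-w_i\ge2$, or $w_j-w_i=1$ and $i<j$; $w$ is a part listing for $U$ if $P(w)$ is isomorphic to $U$. Area sequences of Dyck paths of length $n$ are the sequences of nonnegative integers with $a_1=0$ and $a_i\le a_{i-1}+1$. For each $U$ there is a unique part listing for $U$ that is the area sequence of a Dyck path; it is denoted $\tilde p(U)$. Graded reverse lexicographic order: $(a_1,\dots,a_n)<(b_1,\dots,b_n)$ if $\sum a_i<\sum b_i$, or if the sums are equal and $a_j>b_j$ where $j$ is the first index where they differ. *)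

theory Defs
  imports Complex_Main
begin

text \<open>Posets on the ground set {1..n} are represented by their strict order
relation, a predicate on nat; only arguments in {1..n} are meaningful.
Sequences (w_1,...,w_n) are lists of length n, with w_i = w ! (i - 1).\<close>

text \<open>Unit interval orders on {1..n}: closed unit intervals [x_i, x_i + 1],
numbered from left to right (x_1 \<le> ... \<le> x_n), with i \<prec> j iff interval i
lies strictly to the left of interval j, i.e. x_i + 1 < x_j.\<close>
definition unit_interval_orders :: "nat \<Rightarrow> (nat \<Rightarrow> nat \<Rightarrow> bool) set" where
  "unit_interval_orders n =
     {R. \<exists>x :: nat \<Rightarrow> real.
           (\<forall>i j. 1 \<le> i \<longrightarrow> i \<le> j \<longrightarrow> j \<le> n \<longrightarrow> x i \<le> x j) \<and>
           (\<forall>i j. R i j \<longleftrightarrow> (i \<in> {1..n} \<and> j \<in> {1..n} \<and> x i + 1 < x j))}"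

definition P_of :: "nat list \<Rightarrow> nat \<Rightarrow> nat \<Rightarrow> bool" where
  "P_of w i j \<longleftrightarrow> i \<in> {1..length w} \<and> j \<in> {1..length w} \<and>
     (int (w ! (j - 1)) - int (w ! (i - 1)) \<ge> 2 \<or>
      (int (w ! (j - 1)) - int (w ! (i - 1)) = 1 \<and> i < j))"

definition poset_iso :: "nat \<Rightarrow> (nat \<Rightarrow> nat \<Rightarrow> bool) \<Rightarrow> (nat \<Rightarrow> nat \<Rightarrow> bool) \<Rightarrow> bool" where
  "poset_iso n R S \<longleftrightarrow> (\<exists>f. bij_betw f {1..n} {1..n} \<and>
      (\<forall>i\<in>{1..n}. \<forall>j\<in>{1..n}. R i j \<longleftrightarrow> S (f i) (f j)))"

definition part_listing :: "nat \<Rightarrow> nat list \<Rightarrow> (nat \<Rightarrow> nat \<Rightarrow> bool) \<Rightarrow> bool" where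
  "part_listing n w U \<longleftrightarrow> length w = n \<and> poset_iso n (P_of w) U"

definition area_seq :: "nat \<Rightarrow> nat list \<Rightarrow> bool" where
  "area_seq n a \<longleftrightarrow> length a = n \<and> (n > 0 \<longrightarrow> a ! 0 = 0) \<and>
     (\<forall>i. 0 < i \<and> i < n \<longrightarrow> a ! i \<le> a ! (i - 1) + 1)"

definition p_tilde :: "nat \<Rightarrow> (nat \<Rightarrow> nat \<Rightarrow> bool) \<Rightarrow> nat list" where
  "p_tilde n U = (THE w. area_seq n w \<and> part_listing n w U)"

definition grevlex_less :: "nat list \<Rightarrow> nat list \<Rightarrow> bool" where
  "grevlex_less a b \<longleftrightarrow> length a = length b \<and>
     (sum_list a < sum_list b \<or>
      (sum_list a = sum_list b \<and>
       (\<exists>j < length a. a ! j > b ! j \<and> (\<forall>k < j. a ! k = b ! k))))"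

end

theory Submission
  imports Defs "HOL-Library.List_Lexorder"
begin

definition Qr :: "nat list \<Rightarrow> nat \<Rightarrow> nat \<Rightarrow> bool" where
  "Qr w i j \<longleftrightarrow> i < length w \<and> j < length w \<and>
     (w!j \<ge> w!i + 2 \<or> (w!j = w!i + 1 \<and> i < j))"

lemma P_Qr: "P_of w i j \<longleftrightarrow> 1 \<le> i \<and> 1 \<le> j \<and> Qr w (i-1) (j-1)"
  unfolding P_of_def Qr_def by auto

lemma area_ivt:
  assumes "area_seq n a" "j \<le> p" "p < n" "a!j \<le> v" "v < a!p"
  shows "\<exists>q. j \<le> q \<and> q < p \<and> a!q = v"
  using assms(2-5)
proof (induction p)
  case 0 then show ?case by auto
next
  case (Suc p)
  show ?case
  proof (cases "j = Suc p")
    case True then show ?thesis using Suc by auto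
  next
    case False
    then have jp: "j \<le> p" using Suc by auto
    have "a!(Suc p) \<le> a!p + 1" using assms(1) Suc unfolding area_seq_def
      by (metis diff_Suc_1 zero_less_Suc)
    then have "v \<le> a!p" using Suc by auto
    show ?thesis
    proof (cases "v = a!p")
      case True then show ?thesis using jp by auto
    next
      case False
      then obtain q where "j \<le> q \<and> q < p \<and> a!q = v" using Suc jp \<open>v \<le> a!p\<close> by fastforce
      then show ?thesis by (intro exI[of _ q]) auto
    qed
  qed
qed

lemma grevlex_asym: "grevlex_less a b \<Longrightarrow> \<not> grevlex_less b a"
  unfolding grevlex_less_def
  by (metis less_asym linorder_neqE_nat)

lemma min0:
  assumes ar: "area_seq n a" and lw: "length w = n"
    and bij: "bij_betw g {..<n} {..<n}"
    and iso: "\<forall>i<n. \<forall>k<n. Qr w i k \<longleftrightarrow> Qr a (g i) (g k)"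
  shows "w = a \<or> grevlex_less a w"
proof -
  have la: "length a = n" using ar unfolding area_seq_def by auto
  have isoI: "\<And>i k. i < n \<Longrightarrow> k < n \<Longrightarrow> Qr w i k \<longleftrightarrow> Qr a (g i) (g k)"
    using iso by simp
  have gin: "\<And>i. i < n \<Longrightarrow> g i < n" using bij bij_betwE by blast
  have gsurj: "\<And>q. q < n \<Longrightarrow> \<exists>k<n. g k = q" using bij
    by (metis bij_betw_iff_bijections lessThan_iff)
  have ginj: "inj_on g {..<n}" using bij bij_betw_imp_inj_on by blast
  have S1: "\<forall>i<n. a!(g i) = h \<longrightarrow> h \<le> w!i" for h
  proof (induction h rule: less_induct)
    case (less h)
    show ?case
    proof (intro allI impI)
      fix i assume i: "i < n" "a!(g i) = h"
      show "h \<le> w!i"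
      proof (cases "h = 0")
        case True then show ?thesis by simp
      next
        case False
        have "a!0 = 0" using ar i unfolding area_seq_def by auto
        then obtain q' where q': "q' < g i" "a!q' = h - 1"
          using area_ivt[OF ar, of 0 "g i" "h-1"] gin[OF i(1)] i False by auto
        obtain k where k: "k < n" "g k = q'" using gsurj[of q'] q' gin[OF i(1)] by auto
        have "Qr a (g k) (g i)" unfolding Qr_def using k q' i gin[OF i(1)] la False by auto
        then have "Qr w k i" using isoI[OF k(1) i(1)] by simp
        then have "w!i \<ge> w!k + 1" unfolding Qr_def by auto
        moreover have "h - 1 \<le> w!k" using less[of "h-1"] False k q' by auto
        ultimately show ?thesis by auto
      qed
    qed
  qed
  then have ge: "\<And>i. i < n \<Longrightarrow> a!(g i) \<le> w!i" by blast
  have sw: "sum_list w = (\<Sum>i<n. w!i)" using lw by (simp add: sum_list_sum_nth atLeast0LessThan)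
  have sa: "sum_list a = (\<Sum>i<n. a!(g i))"
    using la sum.reindex_bij_betw[OF bij, of "\<lambda>i. a!i"] by (simp add: sum_list_sum_nth atLeast0LessThan)
  show ?thesis
  proof (cases "\<exists>i<n. a!(g i) < w!i")
    case True
    then have "(\<Sum>i<n. a!(g i)) < (\<Sum>i<n. w!i)"
      using ge by (intro sum_strict_mono_ex1) auto
    then have "sum_list a < sum_list w" using sw sa by simp
    then show ?thesis unfolding grevlex_less_def using la lw by auto
  next
    case False
    have eq: "w!i = a!(g i)" if "i < n" for i
    proof -
      have "\<not> a!(g i) < w!i" using False that by blast
      with ge[OF that] show ?thesis by simp
    qed
    then have sums: "sum_list a = sum_list w" using sw sa by simp
    have S3: "\<And>i k. i < n \<Longrightarrow> k < n \<Longrightarrow> w!k = w!i + 1 \<Longrightarrow> (i < k \<longleftrightarrow> g i < g k)"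
    proof -
      fix i k assume ik: "i < n" "k < n" "w!k = w!i + 1"
      have "Qr w i k \<longleftrightarrow> i < k" unfolding Qr_def using ik lw by auto
      moreover have "Qr a (g i) (g k) \<longleftrightarrow> g i < g k" unfolding Qr_def using ik la gin eq by auto
      ultimately show "i < k \<longleftrightarrow> g i < g k" using isoI[OF ik(1) ik(2)] by simp
    qed
    show ?thesis
    proof (cases "w = a")
      case True then show ?thesis by simp
    next
      case False
      have ex: "\<exists>j. j < n \<and> w!j \<noteq> a!j"
      proof (rule ccontr)
        assume "\<not> (\<exists>j. j < n \<and> w!j \<noteq> a!j)"
        then have "w = a" using la lw by (intro nth_equalityI) auto
        then show False using False by simp
      qed
      define j where "j = (LEAST j. j < n \<and> w!j \<noteq> a!j)"
      have j: "j < n" "w!j \<noteq> a!j" using LeastI_ex[OF ex] unfolding j_def by auto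
      have pre: "w!k = a!k" if "k < j" for k
      proof -
        have "\<not> (k < n \<and> w!k \<noteq> a!k)" using that unfolding j_def by (rule not_less_Least)
        then show ?thesis using that j(1) by auto
      qed
      have "\<not> (a!j < w!j)"
      proof
        assume cd: "a!j < w!j"
        define d where "d = w!j"
        define A where "A = {i. i \<le> j \<and> w!i = d}"
        have "\<exists>i\<in>A. j \<le> g i"
        proof (rule ccontr)
          assume "\<not> (\<exists>i\<in>A. j \<le> g i)"
          then have lt: "\<forall>i\<in>A. g i < j" by auto
          have finA: "finite A" unfolding A_def by auto
          have jA: "j \<in> A" unfolding A_def d_def by auto
          have "g ` A \<subseteq> A - {j}"
          proof
            fix q assume "q \<in> g ` A"
            then obtain i where i: "i \<in> A" "q = g i" by auto
            have "i < n" using i j unfolding A_def by auto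
            have "q < j" using lt i by auto
            moreover have "a!q = d" using eq[OF \<open>i < n\<close>] i unfolding A_def by auto
            ultimately show "q \<in> A - {j}" using pre unfolding A_def by auto
          qed
          moreover have "inj_on g A" using ginj unfolding A_def
            by (rule inj_on_subset) (use j in auto)
          ultimately have "card A \<le> card (A - {j})"
          proof -
            assume sub: "g ` A \<subseteq> A - {j}" and inj: "inj_on g A"
            have "card A = card (g ` A)" using inj by (simp add: card_image)
            also have "\<dots> \<le> card (A - {j})" using sub finA by (intro card_mono) auto
            finally show ?thesis .
          qed
          moreover have "card (A - {j}) < card A" using card_Diff1_less[OF finA jA] .
          ultimately show False by linarith
        qed
        then obtain i where i: "i \<le> j" "w!i = d" "j \<le> g i" unfolding A_def by auto
        define p where "p = g i"
        have "i < n" using i j by auto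
        have p: "p < n" "a!p = d" using gin[OF \<open>i<n\<close>] eq[OF \<open>i<n\<close>] i unfolding p_def by auto
        have "d \<ge> 1" using cd d_def by auto
        have ajd: "a!j \<le> d - 1" using cd d_def by simp
        have dp: "d - 1 < a!p" using p \<open>d \<ge> 1\<close> by simp
        obtain q where q: "j \<le> q" "q < p" "a!q = d - 1"
          using area_ivt[OF ar _ p(1) ajd dp] i unfolding p_def by auto
        define D where "D = {s. s < j \<and> a!s = d - 1}"
        define C where "C = {q. q < p \<and> a!q = d - 1}"
        define B where "B = {s. s < i \<and> w!s = d - 1}"
        have "insert q D \<subseteq> C" unfolding D_def C_def using q by auto
        moreover have "q \<notin> D" unfolding D_def using q by auto
        ultimately have c1: "card D + 1 \<le> card C"
        proof -
          assume sub: "insert q D \<subseteq> C" and nq: "q \<notin> D"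
          have fD: "finite D" unfolding D_def by auto
          have fC: "finite C" unfolding C_def by auto
          have "card (insert q D) = card D + 1" using fD nq by simp
          moreover have "card (insert q D) \<le> card C" using sub fC by (rule card_mono[rotated])
          ultimately show ?thesis by simp
        qed
        have "C \<subseteq> g ` B"
        proof
          fix q' assume "q' \<in> C"
          then have q': "q' < p" "a!q' = d - 1" unfolding C_def by auto
          obtain s where s: "s < n" "g s = q'" using gsurj[of q'] q' p by auto
          have ws: "w!s = d - 1" using eq[OF s(1)] s q' by auto
          have "s < i \<longleftrightarrow> g s < g i" using S3[OF s(1) \<open>i<n\<close>] ws i \<open>d \<ge> 1\<close> by auto
          then have "s < i" using s q' unfolding p_def by auto
          then show "q' \<in> g ` B" unfolding B_def using s ws by auto
        qed
        then have "card C \<le> card (g ` B)" by (intro card_mono) (auto simp: B_def)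
        also have "\<dots> \<le> card B" by (rule card_image_le) (auto simp: B_def)
        also have "\<dots> \<le> card D"
        proof (rule card_mono)
          show "finite D" unfolding D_def by auto
          show "B \<subseteq> D" unfolding B_def D_def using pre i by auto
        qed
        finally show False using c1 by auto
      qed
      then have "w!j < a!j" using j(2) by auto
      then show ?thesis unfolding grevlex_less_def using la lw sums j pre by auto
    qed
  qed
qed


lemma iso_compose:
  assumes a: "part_listing n a U" and w: "part_listing n w U"
  shows "\<exists>g. bij_betw g {..<n} {..<n} \<and> (\<forall>i<n. \<forall>k<n. Qr w i k \<longleftrightarrow> Qr a (g i) (g k))"
proof -
  obtain f1 where f1: "bij_betw f1 {1..n} {1..n}"
    "\<forall>i\<in>{1..n}. \<forall>j\<in>{1..n}. P_of w i j \<longleftrightarrow> U (f1 i) (f1 j)"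
    using w unfolding part_listing_def poset_iso_def by blast
  obtain f2 where f2: "bij_betw f2 {1..n} {1..n}"
    "\<forall>i\<in>{1..n}. \<forall>j\<in>{1..n}. P_of a i j \<longleftrightarrow> U (f2 i) (f2 j)"
    using a unfolding part_listing_def poset_iso_def by blast
  define h where "h i = inv_into {1..n} f2 (f1 i)" for i
  have hb: "bij_betw h {1..n} {1..n}" unfolding h_def
    using bij_betw_trans[OF f1(1) bij_betw_inv_into[OF f2(1)]] by (simp add: comp_def)
  have hin: "h i \<in> {1..n}" if "i \<in> {1..n}" for i using hb that bij_betwE by blast
  have f2h: "f2 (h i) = f1 i" if "i \<in> {1..n}" for i
  proof -
    have "f1 i \<in> {1..n}" using f1(1) that bij_betwE by blast
    then have "f1 i \<in> f2 ` {1..n}" using f2(1) bij_betw_imp_surj_on by blast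
    then show ?thesis unfolding h_def by (rule f_inv_into_f)
  qed
  define g where "g i = h (i+1) - 1" for i
  have gin: "g ` {..<n} \<subseteq> {..<n}"
  proof
    fix q assume "q \<in> g ` {..<n}"
    then obtain i where "i < n" "q = g i" by auto
    then show "q \<in> {..<n}" using hin[of "i+1"] unfolding g_def by auto
  qed
  have ginj: "inj_on g {..<n}"
  proof
    fix i k assume ik: "i \<in> {..<n}" "k \<in> {..<n}" "g i = g k"
    have i1': "i+1 \<in> {1..n}" "k+1 \<in> {1..n}" using ik by auto
    have "h (i+1) = h (k+1)" using ik hin[of "i+1"] hin[of "k+1"] unfolding g_def by auto
    then have "i + 1 = k + 1" using hb i1' unfolding bij_betw_def inj_on_def by blast
    then show "i = k" by simp
  qed
  have gb: "bij_betw g {..<n} {..<n}" unfolding bij_betw_def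
    using ginj endo_inj_surj[OF _ gin ginj] by auto
  have "\<forall>i<n. \<forall>k<n. Qr w i k \<longleftrightarrow> Qr a (g i) (g k)"
  proof (intro allI impI)
    fix i k assume ik: "i < n" "k < n"
    have i1: "i+1 \<in> {1..n}" "k+1 \<in> {1..n}" using ik by auto
    have "Qr w i k \<longleftrightarrow> P_of w (i+1) (k+1)" by (simp add: P_Qr)
    also have "\<dots> \<longleftrightarrow> U (f1 (i+1)) (f1 (k+1))" using f1(2)[rule_format, OF i1(1) i1(2)] .
    also have "\<dots> \<longleftrightarrow> U (f2 (h (i+1))) (f2 (h (k+1)))" using f2h i1 by simp
    also have "\<dots> \<longleftrightarrow> P_of a (h (i+1)) (h (k+1))" using f2(2)[rule_format, OF hin[OF i1(1)] hin[OF i1(2)]] by simp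
    also have "\<dots> \<longleftrightarrow> Qr a (g i) (g k)" unfolding g_def P_Qr using hin[OF i1(1)] hin[OF i1(2)] by auto
    finally show "Qr w i k \<longleftrightarrow> Qr a (g i) (g k)" .
  qed
  then show ?thesis using gb by blast
qed

lemma min_pl:
  assumes "area_seq n a" "part_listing n a U" "part_listing n w U"
  shows "w = a \<or> grevlex_less a w"
proof -
  obtain g where "bij_betw g {..<n} {..<n}" "\<forall>i<n. \<forall>k<n. Qr w i k \<longleftrightarrow> Qr a (g i) (g k)"
    using iso_compose[OF assms(2,3)] by blast
  moreover have "length w = n" using assms(3) unfolding part_listing_def by simp
  ultimately show ?thesis using min0[OF assms(1)] by blast
qed


function path :: "(nat \<Rightarrow> nat) \<Rightarrow> nat \<Rightarrow> nat list" where
  "path p y = (if p y = 0 \<or> y \<le> p y then [y] else path p (p y) @ [y])"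
  by pat_completeness auto
termination by (relation "measure (\<lambda>(p,y). y)") auto

declare path.simps[simp del]

lemma list_less_prefix: "(xs :: nat list) < xs @ [y]"
  by (induction xs) auto

lemma list_less_app_same: "((xs :: nat list) @ ys < xs @ zs) \<longleftrightarrow> ys < zs"
  by (induction xs) auto

lemma list_less_app:
  fixes xs ys :: "nat list"
  assumes "xs < ys" "length ys \<le> length xs"
  shows "xs @ zs < ys @ ws"
proof -
  have "(xs, ys) \<in> lexord {(u, v). u < v}" using assms(1) by (simp add: list_less_def)
  then consider (pre) a v where "ys = xs @ a # v"
    | (dif) u a b v w where "a < b" "xs = u @ a # v" "ys = u @ b # w"
    unfolding lexord_def by blast
  then show ?thesis
  proof cases
    case pre then show ?thesis using assms(2) by simp
  next
    case dif
    then show ?thesis by (simp add: list_less_app_same)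
  qed
qed

locale pp =
  fixes n :: nat and p :: "nat \<Rightarrow> nat"
  assumes p_lt: "\<And>y. 0 < p y \<Longrightarrow> p y < y"
    and p_mono: "\<And>y y'. 1 \<le> y \<Longrightarrow> y \<le> y' \<Longrightarrow> y' \<le> n \<Longrightarrow> p y \<le> p y'"
begin

lemma path_eq: "path p y = (if p y = 0 then [y] else path p (p y) @ [y])"
  using path.simps[of p y] p_lt[of y] by auto

definition lev :: "nat \<Rightarrow> nat" where "lev y = length (path p y) - 1"

lemma path_ne: "path p y \<noteq> []"
  by (subst path_eq) auto

lemma last_path: "last (path p y) = y"
  by (subst path_eq) auto

lemma path_inj: "path p u = path p v \<Longrightarrow> u = v"
proof -
  assume h: "path p u = path p v"
  have "last (path p u) = last (path p v)" using h by (rule arg_cong)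
  then show "u = v" by (simp only: last_path)
qed

lemma len_path: "length (path p y) = Suc (lev y)"
  unfolding lev_def using path_ne by (cases "path p y") auto

lemma lev_eq: "lev y = (if p y = 0 then 0 else Suc (lev (p y)))"
  using len_path[of y] len_path[of "p y"] path_eq[of y] by (auto split: if_splits)

lemma lev0: "lev y = 0 \<longleftrightarrow> p y = 0" using lev_eq[of y] by auto
lemma levS: "lev y = Suc k \<Longrightarrow> p y \<noteq> 0 \<and> lev (p y) = k" using lev_eq[of y] by (auto split: if_splits)
lemma levP: "p y \<noteq> 0 \<Longrightarrow> lev y = Suc (lev (p y))" using lev_eq[of y] by simp

lemma lev_mono: "1 \<le> u \<Longrightarrow> u \<le> v \<Longrightarrow> v \<le> n \<Longrightarrow> lev u \<le> lev v"
proof (induction v arbitrary: u rule: less_induct)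
  case (less v)
  show ?case
  proof (cases "p u = 0")
    case True then show ?thesis by (simp add: lev_eq)
  next
    case False
    have puv: "p u \<le> p v" using p_mono less.prems by blast
    have "p v < v" using p_lt False puv by auto
    have "lev (p u) \<le> lev (p v)"
      using less.IH[OF \<open>p v < v\<close>, of "p u"] puv False \<open>p v < v\<close> less.prems by auto
    then show ?thesis using levP[of u] levP[of v] False puv by auto
  qed
qed

end


context pp
begin

lemma R_char:
  assumes "1 \<le> u" "u \<le> n" "1 \<le> y" "y \<le> n"
  shows "u \<le> p y \<longleftrightarrow> (lev u + 2 \<le> lev y \<or> (lev y = lev u + 1 \<and> u \<le> p y))"
proof
  assume up: "u \<le> p y"
  then have "p y \<noteq> 0" using assms by auto
  then have "lev y = Suc (lev (p y))" by (rule levP)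
  moreover have "lev u \<le> lev (p y)" using lev_mono[OF assms(1) up] p_lt[of y] \<open>p y \<noteq> 0\<close> assms by auto
  ultimately show "lev u + 2 \<le> lev y \<or> (lev y = lev u + 1 \<and> u \<le> p y)" using up by auto
next
  assume h: "lev u + 2 \<le> lev y \<or> (lev y = lev u + 1 \<and> u \<le> p y)"
  show "u \<le> p y"
  proof (rule ccontr)
    assume "\<not> u \<le> p y"
    then have lt: "p y < u" by simp
    with h have h2: "lev u + 2 \<le> lev y" by auto
    then have "p y \<noteq> 0" using lev0[of y] by auto
    then have "lev y = Suc (lev (p y))" by (rule levP)
    moreover have "lev (p y) \<le> lev u" using lev_mono[of "p y" u] lt \<open>p y \<noteq> 0\<close> assms by auto
    ultimately show False using h2 by auto
  qed
qed

lemma same_lev_mono: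
  "\<forall>u v. 1 \<le> u \<and> u \<le> n \<and> 1 \<le> v \<and> v \<le> n \<and> lev u = k \<and> lev v = k \<and> u < v
     \<longrightarrow> path p u < path p v"
proof (induction k)
  case 0
  show ?case
  proof (intro allI impI)
    fix u v assume h: "1 \<le> u \<and> u \<le> n \<and> 1 \<le> v \<and> v \<le> n \<and> lev u = 0 \<and> lev v = 0 \<and> u < v"
    then have "p u = 0" "p v = 0" using h lev0 by auto
    then show "path p u < path p v" using h by (simp add: path_eq)
  qed
next
  case (Suc k)
  show ?case
  proof (intro allI impI)
    fix u v assume h: "1 \<le> u \<and> u \<le> n \<and> 1 \<le> v \<and> v \<le> n \<and> lev u = Suc k \<and> lev v = Suc k \<and> u < v"
    have pu: "p u \<noteq> 0" "lev (p u) = k" using h levS[of u k] by auto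
    have pv: "p v \<noteq> 0" "lev (p v) = k" using h levS[of v k] by auto
    have puv: "p u \<le> p v" using p_mono h by auto
    have "p v < v" using p_lt pv by auto
    have eu: "path p u = path p (p u) @ [u]" using pu by (simp add: path_eq[of u])
    have ev: "path p v = path p (p v) @ [v]" using pv by (simp add: path_eq[of v])
    show "path p u < path p v"
    proof (cases "p u = p v")
      case True then show ?thesis using eu ev h by (simp add: list_less_app_same)
    next
      case False
      then have "p u < p v" using puv by simp
      moreover have "1 \<le> p u" "p v \<le> n" using pu pv \<open>p v < v\<close> h by auto
      ultimately have "path p (p u) < path p (p v)"
        using Suc.IH[rule_format, of "p u" "p v"] pu pv by auto
      moreover have "length (path p (p v)) \<le> length (path p (p u))" using pu pv len_path by simp
      ultimately show ?thesis using eu ev list_less_app by simp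
    qed
  qed
qed

lemma same_lev:
  assumes "1 \<le> u" "u \<le> n" "1 \<le> v" "v \<le> n" "lev u = lev v"
  shows "path p u < path p v \<longleftrightarrow> u < v"
proof -
  have "u < v \<Longrightarrow> path p u < path p v" using same_lev_mono[of "lev u"] assms by auto
  moreover have "v < u \<Longrightarrow> path p v < path p u" using same_lev_mono[of "lev u"] assms by auto
  ultimately show ?thesis using less_asym[of "path p u" "path p v"] by (cases u v rule: linorder_cases) auto
qed

lemma adj_lev:
  assumes "1 \<le> u" "u \<le> n" "1 \<le> y" "y \<le> n" "lev y = Suc (lev u)"
  shows "path p u < path p y \<longleftrightarrow> u \<le> p y"
proof -
  have py: "p y \<noteq> 0" "lev (p y) = lev u" using levS[OF assms(5)] by auto
  have "p y < y" using p_lt py by auto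
  have ey: "path p y = path p (p y) @ [y]" using py by (simp add: path_eq[of y])
  have lens: "length (path p (p y)) = length (path p u)" using py len_path by simp
  consider "u = p y" | "u < p y" | "p y < u" by linarith
  then show ?thesis
  proof cases
    case 1 then show ?thesis using ey list_less_prefix by simp
  next
    case 2
    then have "path p u < path p (p y)" using same_lev[of u "p y"] assms py \<open>p y < y\<close> by auto
    then have "path p u @ [] < path p (p y) @ [y]" using lens by (intro list_less_app) auto
    then show ?thesis using ey 2 by simp
  next
    case 3
    then have "path p (p y) < path p u" using same_lev[of "p y" u] assms py by auto
    then have "path p (p y) @ [y] < path p u @ []" using lens by (intro list_less_app) auto
    then show ?thesis using ey 3 by (auto dest: less_asym)
  qed
qed


end


context pp
begin

definition LL :: "nat list" where "LL = sort_key (path p) [1..<Suc n]"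

lemma LL_props: "length LL = n" "set LL = {1..n}" "distinct LL"
  unfolding LL_def by auto

lemma LL_strict: "i < j \<Longrightarrow> j < n \<Longrightarrow> path p (LL!i) < path p (LL!j)"
proof -
  assume ij: "i < j" "j < n"
  have "sorted (map (path p) LL)" unfolding LL_def by simp
  then have "path p (LL!i) \<le> path p (LL!j)"
    using sorted_nth_mono[of "map (path p) LL" i j] ij LL_props by simp
  moreover have "LL!i \<noteq> LL!j" using LL_props ij nth_eq_iff_index_eq by fastforce
  then have "path p (LL!i) \<noteq> path p (LL!j)" using path_inj by blast
  ultimately show ?thesis by simp
qed

lemma LL_ord: "i < n \<Longrightarrow> j < n \<Longrightarrow> i < j \<longleftrightarrow> path p (LL!i) < path p (LL!j)"
  using LL_strict[of i j] LL_strict[of j i] less_asym[of "path p (LL!i)" "path p (LL!j)"]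
  by (cases i j rule: linorder_cases) auto

lemma LL_mem: "i < n \<Longrightarrow> LL!i \<in> {1..n}"
  using LL_props nth_mem[of i LL] by simp

lemma LL_idx: "v \<in> {1..n} \<Longrightarrow> \<exists>k<n. LL!k = v"
  using LL_props in_set_conv_nth[of v LL] by auto

definition aa :: "nat list" where "aa = map lev LL"

lemma aa_area: "area_seq n aa"
  unfolding area_seq_def
proof (intro conjI impI allI)
  show "length aa = n" unfolding aa_def using LL_props by simp
next
  assume "0 < n"
  show "aa!0 = 0"
  proof (rule ccontr)
    assume "aa!0 \<noteq> 0"
    then have l: "lev (LL!0) \<noteq> 0" unfolding aa_def using \<open>0<n\<close> LL_props by simp
    define y where "y = LL!0"
    have y: "y \<in> {1..n}" using LL_mem \<open>0<n\<close> unfolding y_def by simp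
    have py: "p y \<noteq> 0" using l lev0 unfolding y_def by auto
    then have "p y \<in> {1..n}" using p_lt[of y] y by auto
    then obtain k where k: "k < n" "LL!k = p y" using LL_idx by blast
    have "path p (p y) < path p y" using py path_eq[of y] list_less_prefix by simp
    then have "k < 0" using LL_ord[OF k(1) \<open>0<n\<close>] k y_def by simp
    then show False by simp
  qed
next
  fix i assume i: "0 < i \<and> i < n"
  show "aa!i \<le> aa!(i-1) + 1"
  proof (rule ccontr)
    assume "\<not> aa!i \<le> aa!(i-1) + 1"
    moreover have "i - 1 < length LL" "i < length LL" using i LL_props by auto
    ultimately have gt: "lev (LL!i) > lev (LL!(i-1)) + 1" unfolding aa_def by simp
    define v where "v = LL!i"
    define w where "w = LL!(i-1)"
    have v: "v \<in> {1..n}" using LL_mem i unfolding v_def by simp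
    have pv0: "p v \<noteq> 0" using gt lev0[of v] unfolding v_def by auto
    have pv: "p v \<noteq> 0" "lev v = Suc (lev (p v))" using pv0 levP[OF pv0] by auto
    then have "p v \<in> {1..n}" using p_lt[of v] v by auto
    then obtain k where k: "k < n" "LL!k = p v" using LL_idx by blast
    have ev: "path p v = path p (p v) @ [v]" using pv by (simp add: path_eq[of v])
    have "path p (p v) < path p v" using ev list_less_prefix by simp
    then have "k < i" using LL_ord[OF k(1), of i] k i v_def by simp
    moreover have "k \<noteq> i - 1" using k pv gt unfolding w_def v_def by auto
    ultimately have "k < i - 1" by simp
    moreover have im1: "i - 1 < n" using i by auto
    ultimately have "path p (LL!k) < path p (LL!(i-1))" using LL_ord[OF k(1) im1] by simp
    then have "path p (p v) < path p w" using k(2) unfolding w_def by simp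
    moreover have "length (path p w) \<le> length (path p (p v))"
      using len_path gt pv unfolding v_def w_def by simp
    ultimately have "path p (p v) @ [v] < path p w @ []" by (intro list_less_app)
    then have "path p v < path p w" using ev by simp
    moreover have "path p w < path p v" using LL_ord[OF im1, of i] i unfolding v_def w_def by simp
    ultimately show False by (auto dest: less_asym)
  qed
qed


end


context pp
begin

lemma aa_pl: "part_listing n aa (\<lambda>u y. 1 \<le> u \<and> u \<le> p y)"
  unfolding part_listing_def poset_iso_def
proof (intro conjI exI)
  show "length aa = n" unfolding aa_def using LL_props by simp
  define f where "f i = LL!(i-1)" for i
  have fin: "f ` {1..n} \<subseteq> {1..n}" unfolding f_def using LL_mem by auto
  have finj: "inj_on f {1..n}"
  proof
    fix i j assume "i \<in> {1..n}" "j \<in> {1..n}" "f i = f j"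
    then have "i - 1 = j - 1" unfolding f_def using LL_props nth_eq_iff_index_eq by fastforce
    then show "i = j" using \<open>i \<in> {1..n}\<close> \<open>j \<in> {1..n}\<close> by auto
  qed
  show "bij_betw f {1..n} {1..n}" unfolding bij_betw_def
    using finj endo_inj_surj[OF _ fin finj] by auto
  show "\<forall>i\<in>{1..n}. \<forall>j\<in>{1..n}. P_of aa i j \<longleftrightarrow> 1 \<le> f i \<and> f i \<le> p (f j)"
  proof (intro ballI)
    fix i j assume ij: "i \<in> {1..n}" "j \<in> {1..n}"
    define u where "u = f i"
    define y where "y = f j"
    have uy: "u \<in> {1..n}" "y \<in> {1..n}" unfolding u_def y_def using fin ij by (auto simp: image_subset_iff)
    have au: "aa!(i-1) = lev u" "aa!(j-1) = lev y" unfolding aa_def u_def y_def f_def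
      using ij LL_props by auto
    have "P_of aa i j \<longleftrightarrow> Qr aa (i-1) (j-1)" using ij by (simp add: P_Qr)
    also have "\<dots> \<longleftrightarrow> (lev u + 2 \<le> lev y \<or> (lev y = lev u + 1 \<and> i - 1 < j - 1))"
      unfolding Qr_def using au ij LL_props unfolding aa_def by auto
    also have "\<dots> \<longleftrightarrow> (lev u + 2 \<le> lev y \<or> (lev y = lev u + 1 \<and> path p u < path p y))"
      using LL_ord[of "i-1" "j-1"] ij unfolding u_def y_def f_def by auto
    also have "\<dots> \<longleftrightarrow> (lev u + 2 \<le> lev y \<or> (lev y = lev u + 1 \<and> u \<le> p y))"
      using adj_lev[of u y] uy by auto
    also have "\<dots> \<longleftrightarrow> u \<le> p y" using R_char[of u y] uy by auto
    finally show "P_of aa i j \<longleftrightarrow> 1 \<le> f i \<and> f i \<le> p (f j)" using uy unfolding u_def y_def by auto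
  qed
qed

end


lemma uio_p:
  assumes "U \<in> unit_interval_orders n"
  shows "pp n (\<lambda>y. if \<exists>k. U k y then Max {k. U k y} else 0) \<and>
         U = (\<lambda>u y. 1 \<le> u \<and> u \<le> (\<lambda>y. if \<exists>k. U k y then Max {k. U k y} else 0) y)"
proof -
  define p where "p = (\<lambda>y. if \<exists>k. U k y then Max {k. U k y} else 0)"
  obtain x :: "nat \<Rightarrow> real" where
    mono: "\<And>i j. 1 \<le> i \<Longrightarrow> i \<le> j \<Longrightarrow> j \<le> n \<Longrightarrow> x i \<le> x j" and
    Ux: "\<And>i j. U i j \<longleftrightarrow> (i \<in> {1..n} \<and> j \<in> {1..n} \<and> x i + 1 < x j)"
    using assms unfolding unit_interval_orders_def by blast
  have fin: "finite {k. U k y}" for y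
    by (rule finite_subset[of _ "{1..n}"]) (auto simp: Ux)
  have Ufw: "1 \<le> k \<and> k \<le> p y" if "U k y" for k y
  proof -
    have "k \<le> Max {k. U k y}" using fin that by (intro Max_ge) auto
    then show ?thesis using that Ux[of k y] unfolding p_def by auto
  qed
  have Upy: "U (p y) y" if "p y \<noteq> 0" for y
  proof -
    have ex: "\<exists>k. U k y" using that unfolding p_def by (auto split: if_splits)
    then have "Max {k. U k y} \<in> {k. U k y}" using fin by (intro Max_in) auto
    then show ?thesis using ex unfolding p_def by simp
  qed
  have char: "U u y \<longleftrightarrow> 1 \<le> u \<and> u \<le> p y" for u y
  proof
    assume "U u y" then show "1 \<le> u \<and> u \<le> p y" using Ufw by blast
  next
    assume h: "1 \<le> u \<and> u \<le> p y"
    then have "p y \<noteq> 0" by auto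
    then have U1: "U (p y) y" by (rule Upy)
    then have r: "p y \<in> {1..n}" "y \<in> {1..n}" "x (p y) + 1 < x y" using Ux by auto
    have "x u \<le> x (p y)" using mono[of u "p y"] h r by auto
    then show "U u y" using Ux[of u y] r h by auto
  qed
  have "pp n p"
  proof
    fix y assume "0 < p y"
    then have U1: "U (p y) y" using Upy by auto
    then have r: "p y \<in> {1..n}" "y \<in> {1..n}" "x (p y) + 1 < x y" using Ux by auto
    show "p y < y"
    proof (rule ccontr)
      assume "\<not> p y < y"
      then have "x y \<le> x (p y)" using mono[of y "p y"] r by auto
      then show False using r by auto
    qed
  next
    fix y y' assume yy: "1 \<le> y" "y \<le> y'" "y' \<le> n"
    show "p y \<le> p y'"
    proof (cases "p y = 0")
      case True then show ?thesis by simp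
    next
      case False
      then have U1: "U (p y) y" by (rule Upy)
      then have r: "p y \<in> {1..n}" "y \<in> {1..n}" "x (p y) + 1 < x y" using Ux by auto
      have "x y \<le> x y'" using mono yy by auto
      then have "U (p y) y'" using Ux[of "p y" y'] r yy by auto
      then show ?thesis using Ufw by blast
    qed
  qed
  moreover have "U = (\<lambda>u y. 1 \<le> u \<and> u \<le> p y)" using char by (intro ext) auto
  ultimately show ?thesis unfolding p_def by simp
qed

theorem mainTheorem11:
  fixes n :: nat and U :: "nat \<Rightarrow> nat \<Rightarrow> bool"
  assumes "U \<in> unit_interval_orders n"
  shows "part_listing n (p_tilde n U) U \<and>
         (\<forall>w. part_listing n w U \<and> w \<noteq> p_tilde n U \<longrightarrow> grevlex_less (p_tilde n U) w)"
proof -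
  define p where "p = (\<lambda>y. if \<exists>k. U k y then Max {k. U k y} else 0)"
  have both: "pp n p \<and> U = (\<lambda>u y. 1 \<le> u \<and> u \<le> p y)"
    unfolding p_def by (rule uio_p[OF assms])
  have ppn: "pp n p" using both by (rule conjunct1)
  have Ueq: "U = (\<lambda>u y. 1 \<le> u \<and> u \<le> p y)" using both by (rule conjunct2)
  interpret pp n p by (rule ppn)
  have ar: "area_seq n aa" by (rule aa_area)
  have pl: "part_listing n aa U" unfolding Ueq by (rule aa_pl)
  have uniq: "b = aa" if "area_seq n b \<and> part_listing n b U" for b
  proof (rule ccontr)
    assume ne: "b \<noteq> aa"
    have "b = aa \<or> grevlex_less aa b" using min_pl[OF ar pl] that by blast
    moreover have "aa = b \<or> grevlex_less b aa" using min_pl[of n b U aa] that pl by blast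
    ultimately show False using ne grevlex_asym by blast
  qed
  have pt: "p_tilde n U = aa" unfolding p_tilde_def
  proof (rule the_equality)
    show "area_seq n aa \<and> part_listing n aa U" using ar pl by (rule conjI)
  next
    fix b assume "area_seq n b \<and> part_listing n b U"
    then show "b = aa" by (rule uniq)
  qed
  show ?thesis
  proof (intro conjI allI impI)
    show "part_listing n (p_tilde n U) U" using pt pl by simp
  next
    fix w assume "part_listing n w U \<and> w \<noteq> p_tilde n U"
    then show "grevlex_less (p_tilde n U) w" using min_pl[OF ar pl, of w] pt by auto
  qed
qed


end
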